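(* On the word-RAM model, the explicit-output task of converting a quadratic-form description of an $n$-qubit stabilizer state into its full $2^n$-entry amplitude vector can be solved in time $\Theta(2^n)$ (an $O(2^n)$-time algorithm exists, and $\Omega(2^n)$ time is necessary since the output has length $2^n$).
   Context: A quadratic-form description consists of $0\le k\le n$, $h\in\mathbb F_2^n$, linearly independent $v_1,\dots,v_k\in\mathbb F_2^n$, $d\in\mathbb F_2^k$, an upper-triangular $J\in\mathbb F_2^{k\times k}$, and a nonzero $\gamma\in\mathbb C$; it specifies the vector $(\psi_x)_{x\in\mathbb F_2^n}$ with $\psi_{h\oplus\sum_t y_tv_t}=\gamma\,\mathrm i^{d^\top y}(-1)^{y^\top Jy}$ for all $y\in\mathbb F_2^k$ (bits as integers, ordinary integer products) and $\psi_x=0$ off the affine space $h+\operatorname{span}\{v_1,\dots,v_k\}$. Word-RAM model: words of $\Theta(n)$ bits; XOR, AND, shifts, comparisons, addition mod 4, array lookup with one-word indices, and writing one complex amplitude are unit cost. *)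

theory Defs
  imports Complex_Main
begin

text \<open>Vectors of F_2^m are encoded as natural numbers below 2^m: bit j of the
  number is coordinate j.  A description consists of n, k, h, v (v t is v_t for
  t < k), d, J (J s is row s of the k x k matrix, bit t of J s is J_{s,t})
  and gamma.\<close>

fun span_comb :: "(nat \<Rightarrow> nat) \<Rightarrow> nat \<Rightarrow> nat \<Rightarrow> nat" where
  "span_comb v y 0 = 0"
| "span_comb v y (Suc t) =
     (if bit y t then Bit_Operations.xor (span_comb v y t) (v t) else span_comb v y t)"

definition valid_desc ::
  "nat \<Rightarrow> nat \<Rightarrow> nat \<Rightarrow> (nat \<Rightarrow> nat) \<Rightarrow> nat \<Rightarrow> (nat \<Rightarrow> nat) \<Rightarrow> complex \<Rightarrow> bool" where
  "valid_desc n k h v d J \<gamma> \<longleftrightarrow>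
     k \<le> n \<and> h < 2 ^ n \<and> (\<forall>t<k. v t < 2 ^ n) \<and> d < 2 ^ k \<and> (\<forall>s<k. J s < 2 ^ k)
     \<and> (\<forall>y < 2 ^ k. y \<noteq> 0 \<longrightarrow> span_comb v y k \<noteq> 0)  \<comment> \<open>linear independence\<close>
     \<and> (\<forall>s<k. \<forall>t<k. bit (J s) t \<longrightarrow> s \<le> t)  \<comment> \<open>J upper triangular\<close>
     \<and> \<gamma> \<noteq> 0"

text \<open>Phase i^(d^T y) (-1)^(y^T J y) with ordinary integer products.\<close>
definition qf_phase :: "nat \<Rightarrow> nat \<Rightarrow> (nat \<Rightarrow> nat) \<Rightarrow> nat \<Rightarrow> complex" where
  "qf_phase k d J y =
     \<i> ^ card {t. t < k \<and> bit d t \<and> bit y t}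
     * (-1) ^ card {(s, t). s < k \<and> t < k \<and> bit y s \<and> bit (J s) t \<and> bit y t}"

definition qf_state ::
  "nat \<Rightarrow> nat \<Rightarrow> (nat \<Rightarrow> nat) \<Rightarrow> nat \<Rightarrow> (nat \<Rightarrow> nat) \<Rightarrow> complex \<Rightarrow> nat \<Rightarrow> complex" where
  "qf_state k h v d J \<gamma> x =
     (if \<exists>y < 2 ^ k. x = Bit_Operations.xor h (span_comb v y k)
      then \<gamma> * qf_phase k d J (THE y. y < 2 ^ k \<and> x = Bit_Operations.xor h (span_comb v y k))
      else 0)"

text \<open>Registers and memory cells hold words, i.e. naturals below 2^w (w = word
  size). Every executed instruction costs one time unit.\<close>

datatype instr =
    LoadI nat nat
  | Mov nat nat
  | XorI nat nat nat
  | AndI nat nat nat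
  | OrI nat nat nat
  | Shl nat nat nat
  | Shr nat nat nat
  | Add nat nat nat
  | Sub nat nat nat
  | Less nat nat nat
  | Eq nat nat nat
  | Load nat nat
  | Store nat nat
  | Jz nat nat
  | Jmp nat
  | WriteAmp nat nat
  | WriteZero nat

record rstate =
  pc :: nat
  regs :: "nat \<Rightarrow> nat"
  mem :: "nat \<Rightarrow> nat"
  out :: "nat \<Rightarrow> complex option"

definition halted :: "instr list \<Rightarrow> rstate \<Rightarrow> bool" where
  "halted P s \<longleftrightarrow> length P \<le> pc s"

fun exec_instr :: "nat \<Rightarrow> complex \<Rightarrow> instr \<Rightarrow> rstate \<Rightarrow> rstate" where
  "exec_instr w g (LoadI r c) s = s\<lparr>pc := Suc (pc s), regs := (regs s)(r := c mod 2 ^ w)\<rparr>"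
| "exec_instr w g (Mov r a) s = s\<lparr>pc := Suc (pc s), regs := (regs s)(r := regs s a)\<rparr>"
| "exec_instr w g (XorI r a b) s = s\<lparr>pc := Suc (pc s),
     regs := (regs s)(r := Bit_Operations.xor (regs s a) (regs s b))\<rparr>"
| "exec_instr w g (AndI r a b) s = s\<lparr>pc := Suc (pc s),
     regs := (regs s)(r := Bit_Operations.and (regs s a) (regs s b))\<rparr>"
| "exec_instr w g (OrI r a b) s = s\<lparr>pc := Suc (pc s),
     regs := (regs s)(r := Bit_Operations.or (regs s a) (regs s b))\<rparr>"
| "exec_instr w g (Shl r a b) s = s\<lparr>pc := Suc (pc s),
     regs := (regs s)(r := (regs s a * 2 ^ regs s b) mod 2 ^ w)\<rparr>"
| "exec_instr w g (Shr r a b) s = s\<lparr>pc := Suc (pc s),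
     regs := (regs s)(r := regs s a div 2 ^ regs s b)\<rparr>"
| "exec_instr w g (Add r a b) s = s\<lparr>pc := Suc (pc s),
     regs := (regs s)(r := (regs s a + regs s b) mod 2 ^ w)\<rparr>"
| "exec_instr w g (Sub r a b) s = s\<lparr>pc := Suc (pc s),
     regs := (regs s)(r := (regs s a + 2 ^ w - regs s b) mod 2 ^ w)\<rparr>"
| "exec_instr w g (Less r a b) s = s\<lparr>pc := Suc (pc s),
     regs := (regs s)(r := (if regs s a < regs s b then 1 else 0))\<rparr>"
| "exec_instr w g (Eq r a b) s = s\<lparr>pc := Suc (pc s),
     regs := (regs s)(r := (if regs s a = regs s b then 1 else 0))\<rparr>"
| "exec_instr w g (Load r a) s = s\<lparr>pc := Suc (pc s), regs := (regs s)(r := mem s (regs s a))\<rparr>"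
| "exec_instr w g (Store a b) s = s\<lparr>pc := Suc (pc s), mem := (mem s)(regs s a := regs s b)\<rparr>"
| "exec_instr w g (Jz r t) s = s\<lparr>pc := (if regs s r = 0 then t else Suc (pc s))\<rparr>"
| "exec_instr w g (Jmp t) s = s\<lparr>pc := t\<rparr>"
| "exec_instr w g (WriteAmp a b) s = s\<lparr>pc := Suc (pc s),
     out := (out s)(regs s a := Some (g * \<i> ^ (regs s b mod 4)))\<rparr>"
| "exec_instr w g (WriteZero a) s = s\<lparr>pc := Suc (pc s), out := (out s)(regs s a := Some 0)\<rparr>"

definition step :: "instr list \<Rightarrow> nat \<Rightarrow> complex \<Rightarrow> rstate \<Rightarrow> rstate" where
  "step P w g s = (if halted P s then s else exec_instr w g (P ! pc s) s)"

definition run :: "instr list \<Rightarrow> nat \<Rightarrow> complex \<Rightarrow> nat \<Rightarrow> rstate \<Rightarrow> rstate" where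
  "run P w g t s = (step P w g ^^ t) s"

text \<open>Input layout: mem[0] = n, mem[1] = k, mem[2] = h, mem[3] = d,
  mem[4 + t] = v_t and mem[4 + k + t] = row t of J (t < k); all other cells,
  all registers and pc are 0; no output entry written. gamma is available
  to the unit-cost amplitude-write instruction.\<close>
definition input_mem :: "nat \<Rightarrow> nat \<Rightarrow> nat \<Rightarrow> (nat \<Rightarrow> nat) \<Rightarrow> nat \<Rightarrow> (nat \<Rightarrow> nat) \<Rightarrow> nat \<Rightarrow> nat" where
  "input_mem n k h v d J a =
     (if a = 0 then n else if a = 1 then k else if a = 2 then h else if a = 3 then d
      else if a < 4 + k then v (a - 4)
      else if a < 4 + 2 * k then J (a - 4 - k) else 0)"

definition init_state :: "nat \<Rightarrow> nat \<Rightarrow> nat \<Rightarrow> (nat \<Rightarrow> nat) \<Rightarrow> nat \<Rightarrow> (nat \<Rightarrow> nat) \<Rightarrow> rstate" where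
  "init_state n k h v d J =
     \<lparr>pc = 0, regs = (\<lambda>_. 0), mem = input_mem n k h v d J, out = (\<lambda>_. None)\<rparr>"

definition output_is :: "nat \<Rightarrow> (nat \<Rightarrow> complex) \<Rightarrow> (nat \<Rightarrow> complex option) \<Rightarrow> bool" where
  "output_is n \<psi> o' \<longleftrightarrow> (\<forall>x. o' x = (if x < 2 ^ n then Some (\<psi> x) else None))"

end

theory Submission
  imports Defs
begin


lemma less_pow_bits: "(z::nat) < 2 ^ n \<longleftrightarrow> (\<forall>u\<ge>n. \<not> bit z u)"
  by (metis bit_take_bit_iff not_le take_bit_nat_eq_self_iff bit_eq_iff)

lemma xor_less_pow: "(a::nat) < 2 ^ n \<Longrightarrow> b < 2 ^ n \<Longrightarrow> Bit_Operations.xor a b < 2 ^ n"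
  by (simp add: less_pow_bits bit_xor_iff)

lemma and_less_pow: "(a::nat) < 2 ^ n \<Longrightarrow> Bit_Operations.and a b < 2 ^ n"
  by (simp add: less_pow_bits bit_and_iff)

lemma bit_lt: "bit (z::nat) u \<Longrightarrow> u < z"
  by (metis bit_take_bit_iff less_exp take_bit_nat_eq_self_iff order.strict_trans)

definition pcnt :: "nat \<Rightarrow> nat" where "pcnt z = card {u. bit z u}"

lemma fin_bits: "finite {u. bit (z::nat) u}"
  by (rule finite_subset[of _ "{..<z}"]) (auto dest: bit_lt)

lemma pcnt_rec: "pcnt z = pcnt (z div 2) + z mod 2"
proof -
  have "{u. bit z u} = (if odd z then {0} else {}) \<union> Suc ` {u. bit (z div 2) u}"
  proof (intro set_eqI iffI)
    fix x assume "x \<in> {u. bit z u}"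
    then show "x \<in> (if odd z then {0} else {}) \<union> Suc ` {u. bit (z div 2) u}"
      by (cases x) (auto simp: bit_Suc bit_0)
  qed (auto simp: bit_Suc bit_0 split: if_splits)
  moreover have "card (Suc ` {u. bit (z div 2) u}) = pcnt (z div 2)"
    unfolding pcnt_def by (simp add: card_image)
  ultimately show ?thesis unfolding pcnt_def using fin_bits
    by (auto simp: odd_iff_mod_2_eq_one card_insert_if)
qed

lemma xor01: "Bit_Operations.xor ((a::nat) mod 2) (b mod 2) = (a + b) mod 2"
  by (cases "even a"; cases "even b") (auto simp: odd_iff_mod_2_eq_one even_iff_mod_2_eq_zero, presburger)

lemma par_rec: "pcnt z mod 2 = Bit_Operations.xor (pcnt (z div 2) mod 2) (Bit_Operations.and z 1)"
  by (simp add: and_one_eq xor01 pcnt_rec[of z] mod_add_right_eq)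

lemma bit_add_pow: "\<not> bit (y::nat) t \<Longrightarrow> bit (y + 2 ^ t) i \<longleftrightarrow> bit y i \<or> i = t"
proof -
  assume "\<not> bit y t"
  then have "y + 2 ^ t = Bit_Operations.or y (2 ^ t)"
    by (intro disjunctive_add) (auto simp: bit_exp_iff)
  then show ?thesis by (auto simp: bit_or_iff bit_exp_iff)
qed

lemma span_cong: "(\<And>i. i < m \<Longrightarrow> bit a i = bit b i) \<Longrightarrow> span_comb v a m = span_comb v b m"
  by (induction m) auto

lemma span_add: "t < m \<Longrightarrow> \<not> bit y t \<Longrightarrow>
   span_comb v (y + 2 ^ t) m = Bit_Operations.xor (span_comb v y m) (v t)"
proof (induction m)
  case 0 then show ?case by simp
next
  case (Suc m)
  show ?case
  proof (cases "m = t")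
    case True
    have "span_comb v (y + 2 ^ t) m = span_comb v y m"
      using True Suc.prems by (intro span_cong) (auto simp: bit_add_pow)
    then show ?thesis using True Suc.prems by (simp add: bit_add_pow)
  next
    case False
    then have "t < m" using Suc.prems by simp
    then show ?thesis using Suc False by (auto simp: bit_add_pow ac_simps)
  qed
qed

lemma xor_cancel: "Bit_Operations.xor (a::nat) (Bit_Operations.xor a b) = b"
  by (simp flip: xor.assoc)

lemma span_xor: "span_comb v (Bit_Operations.xor a b) m =
   Bit_Operations.xor (span_comb v a m) (span_comb v b m)"
  by (induction m) (auto simp: bit_xor_iff xor_cancel ac_simps)

lemma span_less: "(\<And>t. t < m \<Longrightarrow> v t < 2 ^ n) \<Longrightarrow> span_comb v y m < 2 ^ n"
  by (induction m) (auto intro: xor_less_pow)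

lemma span_inj:
  assumes "valid_desc n k h v d J \<gamma>" "y1 < 2 ^ k" "y2 < 2 ^ k"
    "span_comb v y1 k = span_comb v y2 k"
  shows "y1 = y2"
proof -
  have "span_comb v (Bit_Operations.xor y1 y2) k = 0" using assms(4) by (simp add: span_xor)
  moreover have "Bit_Operations.xor y1 y2 < 2 ^ k" using assms(2,3) by (rule xor_less_pow)
  ultimately have "Bit_Operations.xor y1 y2 = 0" using assms(1) unfolding valid_desc_def by blast
  then show ?thesis by (metis xor_cancel xor.right_neutral)
qed

definition ephase :: "nat \<Rightarrow> nat \<Rightarrow> (nat \<Rightarrow> nat) \<Rightarrow> nat \<Rightarrow> nat" where
  "ephase k d J y = card {t. t < k \<and> bit d t \<and> bit y t}
     + 2 * card {(s, t). s < k \<and> t < k \<and> bit y s \<and> bit (J s) t \<and> bit y t}"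

lemma qf_phase_eq: "qf_phase k d J y = \<i> ^ ephase k d J y"
proof -
  have "(-1::complex) = \<i> ^ 2" by simp
  then show ?thesis unfolding qf_phase_def ephase_def
    by (simp only: power_add power_mult)
qed

lemma i_pow_mod: "\<i> ^ (e mod 4) = \<i> ^ e"
proof -
  have "\<i> ^ e = \<i> ^ (4 * (e div 4) + e mod 4)" by simp
  also have "\<dots> = \<i> ^ (e mod 4)" by (simp only: power_add power_mult) simp
  finally show ?thesis by simp
qed

lemma dvd_bit: "2 ^ Suc t dvd (y::nat) \<Longrightarrow> bit y s \<Longrightarrow> t < s"
proof -
  assume "2 ^ Suc t dvd y" "bit y s"
  then obtain q where "y = q * 2 ^ Suc t" by (metis dvd_def mult.commute)
  then have "y = push_bit (Suc t) q" by (simp only: push_bit_eq_mult)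
  with \<open>bit y s\<close> have "bit (push_bit (Suc t) q) s" by simp
  then show ?thesis unfolding bit_push_bit_iff by auto
qed

lemma ephase_rec:
  assumes tri: "\<forall>s<k. \<forall>u<k. bit (J s) u \<longrightarrow> s \<le> u" and Jb: "J t < 2 ^ k"
    and tk: "t < k" and dv: "2 ^ Suc t dvd y"
  shows "ephase k d J (y + 2 ^ t) = ephase k d J y + (if bit d t then 1 else 0)
     + 2 * pcnt (Bit_Operations.and (J t) (y + 2 ^ t))"
proof -
  have nb: "\<not> bit y t" using dv dvd_bit by blast
  have bi: "\<And>i. bit (y + 2 ^ t) i \<longleftrightarrow> bit y i \<or> i = t" using nb by (rule bit_add_pow)
  let ?D = "\<lambda>y. {u. u < k \<and> bit d u \<and> bit y u}"
  have "?D (y + 2 ^ t) = (if bit d t then insert t (?D y) else ?D y)"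
    using tk by (auto simp: bi)
  then have cD: "card (?D (y + 2 ^ t)) = card (?D y) + (if bit d t then 1 else 0)"
    using nb by (simp add: card_insert_if)
  let ?Q = "\<lambda>y. {(s, u). s < k \<and> u < k \<and> bit y s \<and> bit (J s) u \<and> bit y u}"
  let ?R = "{(s, u). s = t \<and> u < k \<and> bit (J t) u \<and> bit (y + 2 ^ t) u}"
  have "?Q (y + 2 ^ t) = ?Q y \<union> ?R"
  proof (intro set_eqI iffI)
    fix p assume "p \<in> ?Q (y + 2 ^ t)"
    then obtain s u where p: "p = (s, u)" "s < k" "u < k" "bit (y + 2 ^ t) s" "bit (J s) u"
      "bit (y + 2 ^ t) u" by auto
    show "p \<in> ?Q y \<union> ?R"
    proof (cases "s = t")
      case False
      then have "bit y s" using p bi by auto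
      then have "t < s" using dv dvd_bit by blast
      then have "t < u" using tri p by force
      then show ?thesis using p bi False by auto
    qed (use p in auto)
  next
    fix p assume "p \<in> ?Q y \<union> ?R"
    then show "p \<in> ?Q (y + 2 ^ t)" using tk by (auto simp: bi)
  qed
  moreover have "?Q y \<inter> ?R = {}" using nb by auto
  moreover have "finite (?Q y)" by (rule finite_subset[of _ "{..<k} \<times> {..<k}"]) auto
  moreover have "finite ?R" by (rule finite_subset[of _ "{..<k} \<times> {..<k}"]) (use tk in auto)
  ultimately have cQ: "card (?Q (y + 2 ^ t)) = card (?Q y) + card ?R"
    by (simp add: card_Un_disjoint)
  have "?R = (\<lambda>u. (t, u)) ` {u. bit (Bit_Operations.and (J t) (y + 2 ^ t)) u}"
  proof -
    have "\<And>u. bit (J t) u \<Longrightarrow> u < k" using Jb less_pow_bits not_le by blast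
    then show ?thesis by (auto simp: bit_and_iff)
  qed
  then have "card ?R = pcnt (Bit_Operations.and (J t) (y + 2 ^ t))"
    unfolding pcnt_def by (simp add: card_image inj_on_def)
  then show ?thesis unfolding ephase_def using cD cQ by simp
qed



lemma out_step: "\<exists>a. {x. out (step P w g s) x \<noteq> None} \<subseteq> insert a {x. out s x \<noteq> None}"
proof (cases "halted P s")
  case True then show ?thesis by (auto simp: step_def)
next
  case False
  then show ?thesis unfolding step_def
    by (cases "P ! pc s") auto
qed

lemma out_run: "finite {x. out s x \<noteq> None} \<Longrightarrow>
   finite {x. out (run P w g t s) x \<noteq> None} \<and>
   card {x. out (run P w g t s) x \<noteq> None} \<le> card {x. out s x \<noteq> None} + t"
proof (induction t)
  case 0 then show ?case by (simp add: run_def)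
next
  case (Suc t)
  let ?A = "{x. out (run P w g t s) x \<noteq> None}"
  obtain a where a: "{x. out (run P w g (Suc t) s) x \<noteq> None} \<subseteq> insert a ?A"
    using out_step[of P w g "run P w g t s"] by (auto simp: run_def)
  have f: "finite (insert a ?A)" using Suc by simp
  have "card {x. out (run P w g (Suc t) s) x \<noteq> None} \<le> card (insert a ?A)"
    using a f by (rule card_mono[rotated])
  also have "\<dots> \<le> Suc (card ?A)" by (rule card_insert_le_m1) (auto simp: card_insert_if Suc f)
  finally show ?case using Suc a f by (auto intro: finite_subset)
qed

lemma lower_bound:
  assumes "output_is n \<psi> (out (run P w g t (init_state n k h v d J)))"
  shows "2 ^ n \<le> t"
proof -
  have "{x. out (run P w g t (init_state n k h v d J)) x \<noteq> None} = {..<2 ^ n}"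
    using assms unfolding output_is_def by auto
  moreover have "card {x. out (run P w g t (init_state n k h v d J)) x \<noteq> None} \<le> t"
    using out_run[of "init_state n k h v d J" P w g t] by (simp add: init_state_def)
  ultimately show ?thesis by simp
qed



definition prog :: "instr list" where
  "prog = [LoadI 1 1,
    Load 2 0,
    Load 3 1,
    LoadI 13 2,
    Load 9 13,
    LoadI 13 3,
    Load 10 13,
    LoadI 11 3,
    LoadI 12 4,
    Shl 4 1 2,
    Shl 5 1 3,
    Add 6 3 3,
    Add 6 6 12,
    Add 7 6 5,
    Add 8 7 5,
    LoadI 13 0,
    Less 14 13 4,
    Jz 14 21,
    WriteZero 13,
    Add 13 13 1,
    Jmp 16,
    LoadI 13 1,
    Less 14 13 5,
    Jz 14 33,
    Shr 15 13 1,
    Add 15 15 6,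
    Load 15 15,
    AndI 16 13 1,
    XorI 15 15 16,
    Add 16 6 13,
    Store 16 15,
    Add 13 13 1,
    Jmp 22,
    Store 7 9,
    Store 8 0,
    Mov 13 3,
    Jz 13 69,
    Sub 13 13 1,
    Shl 14 1 13,
    Add 15 14 14,
    Add 16 13 12,
    Load 16 16,
    Add 17 13 12,
    Add 17 17 3,
    Load 17 17,
    Shr 18 10 13,
    AndI 18 18 1,
    Mov 19 0,
    Less 20 19 5,
    Jz 20 36,
    Add 21 19 14,
    Add 22 7 19,
    Load 22 22,
    XorI 22 22 16,
    Add 23 7 21,
    Store 23 22,
    Add 22 8 19,
    Load 22 22,
    Add 22 22 18,
    AndI 23 17 21,
    Add 23 23 6,
    Load 23 23,
    Add 23 23 23,
    Add 22 22 23,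
    AndI 22 22 11,
    Add 23 8 21,
    Store 23 22,
    Add 19 19 15,
    Jmp 48,
    LoadI 13 0,
    Less 14 13 5,
    Jz 14 79,
    Add 15 7 13,
    Load 15 15,
    Add 16 8 13,
    Load 16 16,
    WriteAmp 15 16,
    Add 13 13 1,
    Jmp 70]"

lemma prog_len [simp]: "length prog = 79" by (simp add: prog_def)

lemma prog_nth [simp]:
  "prog ! 0 = LoadI 1 1"
  "prog ! 1 = Load 2 0"
  "prog ! Suc 0 = Load 2 0"
  "prog ! 2 = Load 3 1"
  "prog ! 3 = LoadI 13 2"
  "prog ! 4 = Load 9 13"
  "prog ! 5 = LoadI 13 3"
  "prog ! 6 = Load 10 13"
  "prog ! 7 = LoadI 11 3"
  "prog ! 8 = LoadI 12 4"
  "prog ! 9 = Shl 4 1 2"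
  "prog ! 10 = Shl 5 1 3"
  "prog ! 11 = Add 6 3 3"
  "prog ! 12 = Add 6 6 12"
  "prog ! 13 = Add 7 6 5"
  "prog ! 14 = Add 8 7 5"
  "prog ! 15 = LoadI 13 0"
  "prog ! 16 = Less 14 13 4"
  "prog ! 17 = Jz 14 21"
  "prog ! 18 = WriteZero 13"
  "prog ! 19 = Add 13 13 1"
  "prog ! 20 = Jmp 16"
  "prog ! 21 = LoadI 13 1"
  "prog ! 22 = Less 14 13 5"
  "prog ! 23 = Jz 14 33"
  "prog ! 24 = Shr 15 13 1"
  "prog ! 25 = Add 15 15 6"
  "prog ! 26 = Load 15 15"
  "prog ! 27 = AndI 16 13 1"
  "prog ! 28 = XorI 15 15 16"
  "prog ! 29 = Add 16 6 13"
  "prog ! 30 = Store 16 15"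
  "prog ! 31 = Add 13 13 1"
  "prog ! 32 = Jmp 22"
  "prog ! 33 = Store 7 9"
  "prog ! 34 = Store 8 0"
  "prog ! 35 = Mov 13 3"
  "prog ! 36 = Jz 13 69"
  "prog ! 37 = Sub 13 13 1"
  "prog ! 38 = Shl 14 1 13"
  "prog ! 39 = Add 15 14 14"
  "prog ! 40 = Add 16 13 12"
  "prog ! 41 = Load 16 16"
  "prog ! 42 = Add 17 13 12"
  "prog ! 43 = Add 17 17 3"
  "prog ! 44 = Load 17 17"
  "prog ! 45 = Shr 18 10 13"
  "prog ! 46 = AndI 18 18 1"
  "prog ! 47 = Mov 19 0"
  "prog ! 48 = Less 20 19 5"
  "prog ! 49 = Jz 20 36"
  "prog ! 50 = Add 21 19 14"
  "prog ! 51 = Add 22 7 19"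
  "prog ! 52 = Load 22 22"
  "prog ! 53 = XorI 22 22 16"
  "prog ! 54 = Add 23 7 21"
  "prog ! 55 = Store 23 22"
  "prog ! 56 = Add 22 8 19"
  "prog ! 57 = Load 22 22"
  "prog ! 58 = Add 22 22 18"
  "prog ! 59 = AndI 23 17 21"
  "prog ! 60 = Add 23 23 6"
  "prog ! 61 = Load 23 23"
  "prog ! 62 = Add 23 23 23"
  "prog ! 63 = Add 22 22 23"
  "prog ! 64 = AndI 22 22 11"
  "prog ! 65 = Add 23 8 21"
  "prog ! 66 = Store 23 22"
  "prog ! 67 = Add 19 19 15"
  "prog ! 68 = Jmp 48"
  "prog ! 69 = LoadI 13 0"
  "prog ! 70 = Less 14 13 5"
  "prog ! 71 = Jz 14 79"
  "prog ! 72 = Add 15 7 13"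
  "prog ! 73 = Load 15 15"
  "prog ! 74 = Add 16 8 13"
  "prog ! 75 = Load 16 16"
  "prog ! 76 = WriteAmp 15 16"
  "prog ! 77 = Add 13 13 1"
  "prog ! 78 = Jmp 70"
  by (simp_all add: prog_def)

definition reach :: "instr list \<Rightarrow> nat \<Rightarrow> complex \<Rightarrow> rstate \<Rightarrow> (rstate \<Rightarrow> bool) \<Rightarrow> nat \<Rightarrow> bool" where
  "reach P w g s Q b \<longleftrightarrow> (\<exists>t\<le>b. Q (run P w g t s))"

lemma run_0 [simp]: "run P w g 0 s = s" by (simp add: run_def)
lemma run_Suc: "run P w g (Suc t) s = run P w g t (step P w g s)"
  by (simp only: run_def funpow_Suc_right comp_def)
lemma Suc_Suc_0: "Suc (Suc 0) = 2" by simp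
declare Suc_Suc_0 [simp]
lemma run_numeral: "run P w g (numeral m) s = run P w g (pred_numeral m) (step P w g s)"
  by (simp add: numeral_eq_Suc run_Suc)
lemma run_add: "run P w g (t1 + t2) s = run P w g t2 (run P w g t1 s)"
  by (simp only: run_def add.commute[of t1] funpow_add comp_def)
lemma step_eq: "pc s < length P \<Longrightarrow> step P w g s = exec_instr w g (P ! pc s) s"
  by (simp add: step_def halted_def)

lemma reach_run: "Q (run P w g t s) \<Longrightarrow> t \<le> b \<Longrightarrow> reach P w g s Q b"
  unfolding reach_def by blast
lemma reach_mono: "reach P w g s Q b \<Longrightarrow> b \<le> b' \<Longrightarrow> reach P w g s Q b'"
  unfolding reach_def by (meson order.trans)
lemma reach_trans: "reach P w g s Q b1 \<Longrightarrow> (\<And>s'. Q s' \<Longrightarrow> reach P w g s' R b2) \<Longrightarrow> reach P w g s R (b1 + b2)"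
  unfolding reach_def by (metis add_mono run_add)

lemma loop_reach:
  assumes body: "\<And>i s. I i s \<Longrightarrow> i < m \<Longrightarrow> reach P w g s (I (Suc i)) (f i)"
    and ex: "\<And>s. I m s \<Longrightarrow> reach P w g s Q c"
  shows "I i s \<Longrightarrow> i \<le> m \<Longrightarrow> reach P w g s Q ((\<Sum>j\<in>{i..<m}. f j) + c)"
proof (induction "m - i" arbitrary: i s)
  case 0 then have "i = m" by simp
  then show ?case using ex 0 by simp
next
  case (Suc x)
  then have im: "i < m" by simp
  have "reach P w g s Q (f i + ((\<Sum>j\<in>{Suc i..<m}. f j) + c))"
    by (rule reach_trans[OF body[OF Suc.prems(1) im]]) (use Suc im in auto)
  moreover have "(\<Sum>j\<in>{i..<m}. f j) = f i + (\<Sum>j\<in>{Suc i..<m}. f j)"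
    using im by (simp add: sum.atLeast_Suc_lessThan)
  ultimately show ?case by (simp add: add.assoc)
qed

lemma loop_reach_const:
  assumes body: "\<And>i s. I i s \<Longrightarrow> i < m \<Longrightarrow> reach P w g s (I (Suc i)) a"
    and ex: "\<And>s. I m s \<Longrightarrow> reach P w g s Q c"
  shows "I 0 s \<Longrightarrow> reach P w g s Q (a * m + c)"
  using loop_reach[of I m P w g "\<lambda>_. a" Q c 0 s] assms by (simp add: mult.commute)

locale qfl =
  fixes n w k h v d J \<gamma>
  assumes valid: "valid_desc n k h v d J \<gamma>" and wb: "n + 3 \<le> w"
begin

definition "N = (2::nat) ^ n"
definition "K = (2::nat) ^ k"
definition "WW = (2::nat) ^ w"
abbreviation "B \<equiv> 4 + 2 * k"
abbreviation "BX \<equiv> 4 + 2 * k + K"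
abbreviation "BE \<equiv> 4 + 2 * k + 2 * K"
abbreviation "M0 \<equiv> input_mem n k h v d J"
abbreviation "OUT0 \<equiv> (\<lambda>a. if a < N then Some (0::complex) else None)"

lemma kn: "k \<le> n" using valid by (simp add: valid_desc_def)
lemma KN: "K \<le> N" using kn by (simp add: K_def N_def)
lemma k_le_K: "2 * k + 4 \<le> 4 * (2::nat) ^ k"
proof (induction k)
  case (Suc k) then show ?case by simp
qed simp
lemma NW: "8 * N \<le> WW"
proof -
  have "8 * N = 2 ^ (n + 3)" by (simp add: power_add N_def)
  also have "\<dots> \<le> 2 ^ w" using wb by (simp add: power_increasing)
  finally show ?thesis by (simp add: WW_def)
qed
lemma W: "B + 3 * K < WW" "8 \<le> WW" "N < WW" "K \<le> N" "1 \<le> K" "1 \<le> N"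
proof -
  have "1 \<le> N" "1 \<le> K" by (simp_all add: N_def K_def)
  then show "8 \<le> WW" "N < WW" using NW by linarith+
  show "1 \<le> N" "1 \<le> K" by fact+
  show "K \<le> N" by (rule KN)
  have "B + 3 * K \<le> 7 * N" using k_le_K KN by (simp add: K_def)
  then show "B + 3 * K < WW" using NW \<open>1 \<le> N\<close> by linarith
qed
lemma nw: "n < w" using wb by simp
lemma kw: "k < w" using wb kn by simp
lemma pow_fold: "(2::nat) ^ w = WW" "(2::nat) ^ n = N" "(2::nat) ^ k = K"
  by (simp_all add: WW_def N_def K_def)
lemma shl_n: "(2::nat) ^ n mod 2 ^ w = N" "(2::nat) ^ k mod 2 ^ w = K"
  using nw kw by (simp_all add: N_def K_def power_strict_increasing)

definition base :: "rstate \<Rightarrow> bool" where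
  "base s \<longleftrightarrow> regs s 0 = 0 \<and> regs s 1 = 1 \<and> regs s 2 = n \<and> regs s 3 = k \<and> regs s 4 = N
     \<and> regs s 5 = K \<and> regs s 6 = B \<and> regs s 7 = BX \<and> regs s 8 = BE \<and> regs s 9 = h
     \<and> regs s 10 = d \<and> regs s 11 = 3 \<and> regs s 12 = 4"

definition I1 :: "nat \<Rightarrow> rstate \<Rightarrow> bool" where
  "I1 x s \<longleftrightarrow> pc s = 16 \<and> base s \<and> regs s 13 = x \<and> x \<le> N \<and> mem s = M0
     \<and> out s = (\<lambda>a. if a < x then Some 0 else None)"

lemmas ex_simps = run_numeral run_Suc step_eq base_def shl_n pow_fold


lemma blk1: "I1 x s \<Longrightarrow> x < N \<Longrightarrow> reach prog w \<gamma> s (I1 (Suc x)) 5"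
proof (rule reach_run[of _ _ _ _ 5])
  assume a: "I1 x s" "x < N"
  let ?s = "run prog w \<gamma> 5 s"
  have "pc ?s = 16 \<and> base ?s \<and> regs ?s 13 = Suc x \<and> mem ?s = mem s \<and> out ?s = (out s)(x := Some 0)"
    using a W unfolding I1_def by (simp add: ex_simps)
  then show "I1 (Suc x) ?s" using a unfolding I1_def by (auto simp: fun_eq_iff)
qed simp

lemma blk_init: "reach prog w \<gamma> (init_state n k h v d J) (I1 0) 16"
proof (rule reach_run[of _ _ _ _ 16])
  show "I1 0 (run prog w \<gamma> 16 (init_state n k h v d J))"
    using W by (simp add: ex_simps init_state_def I1_def input_mem_def)
qed simp

definition I2 :: "nat \<Rightarrow> rstate \<Rightarrow> bool" where
  "I2 z s \<longleftrightarrow> pc s = 22 \<and> base s \<and> regs s 13 = z \<and> 1 \<le> z \<and> z \<le> K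
     \<and> (\<forall>a<B. mem s a = M0 a) \<and> (\<forall>y<z. mem s (B + y) = pcnt y mod 2) \<and> out s = OUT0"

lemma blk1x: "I1 N s \<Longrightarrow> reach prog w \<gamma> s (I2 1) 3"
proof (rule reach_run[of _ _ _ _ 3])
  assume a: "I1 N s"
  let ?s = "run prog w \<gamma> 3 s"
  have "pc ?s = 22 \<and> base ?s \<and> regs ?s 13 = 1 \<and> mem ?s = mem s \<and> out ?s = out s"
    using a W unfolding I1_def by (simp add: ex_simps)
  moreover have "pcnt 0 = 0" by (simp add: pcnt_def)
  ultimately show "I2 1 ?s" using a W unfolding I1_def I2_def by (auto simp: input_mem_def)
qed simp

lemma blk2: "I2 z s \<Longrightarrow> z < K \<Longrightarrow> reach prog w \<gamma> s (I2 (Suc z)) 11"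
proof (rule reach_run[of _ _ _ _ 11])
  assume a: "I2 z s" "z < K"
  let ?s = "run prog w \<gamma> 11 s"
  have m: "mem s (B + z div 2) = pcnt (z div 2) mod 2" using a unfolding I2_def by auto
  have "pc ?s = 22 \<and> base ?s \<and> regs ?s 13 = Suc z
     \<and> mem ?s = (mem s)(B + z := Bit_Operations.xor (pcnt (z div 2) mod 2) (Bit_Operations.and z 1))
     \<and> out ?s = out s"
    using a W m unfolding I2_def by (simp add: ex_simps add_ac)
  then show "I2 (Suc z) ?s" using a unfolding I2_def by (auto simp: par_rec[of z, unfolded and_one_eq, symmetric] less_Suc_eq)
qed simp


definition Xv :: "nat \<Rightarrow> nat" where "Xv y = Bit_Operations.xor h (span_comb v y k)"
definition Ev :: "nat \<Rightarrow> nat" where "Ev y = ephase k d J y mod 4"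

definition common3 :: "rstate \<Rightarrow> bool" where
  "common3 s \<longleftrightarrow> base s \<and> (\<forall>a<B. mem s a = M0 a) \<and> (\<forall>y<K. mem s (B + y) = pcnt y mod 2)
     \<and> out s = OUT0"

definition I3 :: "nat \<Rightarrow> rstate \<Rightarrow> bool" where
  "I3 i s \<longleftrightarrow> pc s = 36 \<and> common3 s \<and> i \<le> k \<and> regs s 13 = k - i
     \<and> (\<forall>y<K. 2 ^ (k - i) dvd y \<longrightarrow> mem s (BX + y) = Xv y \<and> mem s (BE + y) = Ev y)"

lemma span0: "span_comb v 0 m = 0" by (induction m) auto
lemma ephase0: "ephase k d J 0 = 0" by (simp add: ephase_def)

lemma blk2x: "I2 K s \<Longrightarrow> reach prog w \<gamma> s (I3 0) 5"
proof (rule reach_run[of _ _ _ _ 5])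
  assume a: "I2 K s"
  let ?s = "run prog w \<gamma> 5 s"
  have "pc ?s = 36 \<and> base ?s \<and> regs ?s 13 = k \<and> mem ?s = (mem s)(BX := h, BE := 0) \<and> out ?s = out s"
    using a W unfolding I2_def by (simp add: ex_simps)
  then have st: "pc ?s = 36" "base ?s" "regs ?s 13 = k" "mem ?s = (mem s)(BX := h, BE := 0)" "out ?s = out s"
    by auto
  have tab: "\<forall>y<K. 2 ^ (k - 0) dvd y \<longrightarrow> mem ?s (BX + y) = Xv y \<and> mem ?s (BE + y) = Ev y"
  proof (intro allI impI)
    fix y assume "y < K" "2 ^ (k - 0) dvd y"
    then have "y = 0" by (metis K_def diff_zero dvd_imp_le leD neq0_conv)
    then show "mem ?s (BX + y) = Xv y \<and> mem ?s (BE + y) = Ev y"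
      using st W by (simp add: Xv_def Ev_def span0 ephase0)
  qed
  show "I3 0 ?s" using a W st tab unfolding I2_def I3_def common3_def by simp
qed simp

definition I4 :: "nat \<Rightarrow> nat \<Rightarrow> nat \<Rightarrow> rstate \<Rightarrow> bool" where
  "I4 t m j s \<longleftrightarrow> pc s = 48 \<and> common3 s \<and> t < k \<and> m * 2 ^ Suc t = K \<and> j \<le> m
     \<and> regs s 13 = t \<and> regs s 14 = 2 ^ t \<and> regs s 15 = 2 ^ Suc t \<and> regs s 16 = v t
     \<and> regs s 17 = J t \<and> regs s 18 = (if bit d t then 1 else 0) \<and> regs s 19 = j * 2 ^ Suc t
     \<and> (\<forall>y<K. (2 ^ Suc t dvd y \<or> (2 ^ t dvd y \<and> y < j * 2 ^ Suc t)) \<longrightarrow>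
          mem s (BX + y) = Xv y \<and> mem s (BE + y) = Ev y)"

lemma vJ: "t < k \<Longrightarrow> v t < N" "s < k \<Longrightarrow> J s < K"
  using valid by (auto simp: valid_desc_def N_def K_def)

lemma blk3a: "I3 i s \<Longrightarrow> i < k \<Longrightarrow> reach prog w \<gamma> s (I4 (k - Suc i) (2 ^ i) 0) 12"
proof (rule reach_run[of _ _ _ _ 12])
  assume a: "I3 i s" "i < k"
  define t where "t = k - Suc i"
  define p where "p = (2::nat) ^ t"
  have kt: "k - i = Suc t" "t < k" using a by (auto simp: t_def)
  have pK: "2 * p \<le> K" using kt by (simp add: p_def K_def power_increasing flip: power_Suc)
  have p2: "2 ^ t mod WW = p" using pK W by (simp add: p_def)
  have mv: "mem s (t + 4) = v t" "mem s (t + 4 + k) = J t" using a kt unfolding I3_def common3_def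
    by (auto simp: input_mem_def)
  have db: "(d div 2 ^ t) mod 2 = (if bit d t then 1 else 0)" by (simp add: p_def bit_iff_odd odd_iff_mod_2_eq_one)
  let ?s = "run prog w \<gamma> 12 s"
  have "pc ?s = 48 \<and> base ?s \<and> regs ?s 13 = t \<and> regs ?s 14 = p \<and> regs ?s 15 = 2 * p
     \<and> regs ?s 16 = v t \<and> regs ?s 17 = J t \<and> regs ?s 18 = (if bit d t then 1 else 0)
     \<and> regs ?s 19 = 0 \<and> mem ?s = mem s \<and> out ?s = out s"
    using a W kt pK p2 mv db unfolding I3_def common3_def by (simp add: ex_simps)
  moreover have "i + Suc (k - Suc i) = k" using a by simp
  then have "(2::nat) ^ i * 2 ^ Suc (k - Suc i) = 2 ^ k" by (metis power_add)
  ultimately show "I4 (k - Suc i) (2 ^ i) 0 ?s" using a kt unfolding I3_def I4_def common3_def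
    by (auto simp: t_def p_def K_def simp flip: power_add)
qed simp


lemma odd_mult:
  fixes a :: nat
  assumes "2 ^ t dvd a" "\<not> 2 ^ Suc t dvd a" "a < Suc j * 2 ^ Suc t" "a \<noteq> j * 2 ^ Suc t + 2 ^ t"
  shows "a < j * 2 ^ Suc t"
proof -
  obtain q where q: "a = q * 2 ^ t" using assms(1) by (metis dvd_def mult.commute)
  have "odd q"
  proof
    assume "even q" then obtain r where "q = 2 * r" by auto
    then have "a = r * 2 ^ Suc t" using q by simp
    then show False using assms(2) by simp
  qed
  have "q * 2 ^ t < (2 * j + 2) * 2 ^ t" using assms(3) q by (simp add: algebra_simps)
  then have "q < 2 * j + 2" by (simp only: mult_less_cancel2)
  moreover have "q \<noteq> 2 * j + 1" using assms(4) q by (auto simp: algebra_simps)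
  ultimately have "q < 2 * j" using \<open>odd q\<close> by presburger
  then have "q * 2 ^ t < (2 * j) * 2 ^ t" by simp
  then show ?thesis using q by (simp add: algebra_simps)
qed

lemma and3: "Bit_Operations.and (x::nat) 3 = x mod 4"
proof -
  have "mask 2 = (3::nat)" by (simp add: mask_eq_exp_minus_1)
  then have "Bit_Operations.and x 3 = take_bit 2 x" by (metis take_bit_eq_mask)
  then show ?thesis by (simp add: take_bit_eq_mod)
qed

lemma Xv_step: "t < k \<Longrightarrow> 2 ^ Suc t dvd y0 \<Longrightarrow>
    Xv (y0 + 2 ^ t) = Bit_Operations.xor (Xv y0) (v t)"
proof -
  assume "t < k" "2 ^ Suc t dvd y0"
  moreover then have "\<not> bit y0 t" using dvd_bit by blast
  ultimately show ?thesis unfolding Xv_def by (simp add: span_add xor.assoc)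
qed

lemma mod4: "((a::nat) + b + 2 * c) mod 4 = (a mod 4 + b + (c mod 2 + c mod 2)) mod 4"
proof -
  have e: "(2 * c) mod 4 = 2 * (c mod 2)" using mod_mult_mult1[of 2 c 2] by simp
  have "((a::nat) + b + 2 * c) mod 4 = ((a + b) + (2 * c) mod 4) mod 4" by (simp add: mod_add_right_eq)
  also have "\<dots> = (a + (b + 2 * (c mod 2))) mod 4" by (simp add: e add.assoc)
  also have "\<dots> = (a mod 4 + (b + 2 * (c mod 2))) mod 4" by (simp add: mod_add_left_eq)
  finally show ?thesis by (simp add: add.assoc mult_2)
qed

lemma Ev_step: "t < k \<Longrightarrow> 2 ^ Suc t dvd y0 \<Longrightarrow>
    Ev (y0 + 2 ^ t) = (Ev y0 + (if bit d t then 1 else 0)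
       + (pcnt (Bit_Operations.and (J t) (y0 + 2 ^ t)) mod 2 + pcnt (Bit_Operations.and (J t) (y0 + 2 ^ t)) mod 2)) mod 4"
proof -
  assume a: "t < k" "2 ^ Suc t dvd y0"
  have tri: "\<forall>s<k. \<forall>u<k. bit (J s) u \<longrightarrow> s \<le> u" using valid by (simp add: valid_desc_def)
  have "ephase k d J (y0 + 2 ^ t) = ephase k d J y0 + (if bit d t then 1 else 0)
     + 2 * pcnt (Bit_Operations.and (J t) (y0 + 2 ^ t))"
    using ephase_rec[OF tri _ a(1) a(2)] vJ(2)[OF a(1)] by (simp add: K_def)
  then show ?thesis unfolding Ev_def by (simp only: mod4)
qed

lemma blk3b: "I4 t m j s \<Longrightarrow> j < m \<Longrightarrow> reach prog w \<gamma> s (I4 t m (Suc j)) 21"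
proof (rule reach_run[of _ _ _ _ 21])
  assume a: "I4 t m j s" "j < m"
  define p where "p = (2::nat) ^ t"
  define y0 where "y0 = j * (2 * p)"
  define yy where "yy = y0 + p"
  define dt where "dt = (if bit d t then 1 else 0::nat)"
  define par where "par = pcnt (Bit_Operations.and (J t) yy) mod 2"
  have tk: "t < k" and mK: "m * (2 * p) = K" using a unfolding I4_def p_def by auto
  have p1: "1 \<le> p" by (simp add: p_def)
  have "Suc j * (2 * p) \<le> m * (2 * p)" using a(2) by (intro mult_right_mono) auto
  then have y0K: "y0 + 2 * p \<le> K" using mK by (simp add: y0_def algebra_simps)
  have dv: "2 ^ Suc t dvd y0" by (simp add: y0_def p_def)
  have tab: "\<forall>y<K. (2 ^ Suc t dvd y \<or> (2 ^ t dvd y \<and> y < j * 2 ^ Suc t)) \<longrightarrow>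
          mem s (BX + y) = Xv y \<and> mem s (BE + y) = Ev y" using a unfolding I4_def by blast
  have mX: "mem s (BX + y0) = Xv y0" "mem s (BE + y0) = Ev y0"
    using tab dv y0K p1 by auto
  have aK: "Bit_Operations.and (J t) yy < K" using vJ(2)[OF tk] by (simp add: K_def and_less_pow)
  have c3: "common3 s" using a unfolding I4_def by blast
  then have mP: "mem s (B + Bit_Operations.and (J t) yy) = par" using aK unfolding common3_def par_def by blast
  have r: "pc s = 48" "base s" "regs s 13 = t" "regs s 14 = p" "regs s 15 = 2 * p" "regs s 16 = v t"
    "regs s 17 = J t" "regs s 18 = dt" "regs s 19 = y0"
    using a c3 unfolding I4_def common3_def p_def y0_def dt_def by (auto simp: algebra_simps)
  have pb: "par \<le> 1" "dt \<le> 1" "Ev y0 < 4" by (auto simp: par_def dt_def Ev_def)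
  let ?s = "run prog w \<gamma> 21 s"
  have st: "pc ?s = 48 \<and> base ?s \<and> regs ?s 13 = t \<and> regs ?s 14 = p \<and> regs ?s 15 = 2 * p
     \<and> regs ?s 16 = v t \<and> regs ?s 17 = J t \<and> regs ?s 18 = dt
     \<and> regs ?s 19 = y0 + 2 * p \<and> mem ?s = (mem s)(BX + yy := Bit_Operations.xor (Xv y0) (v t),
          BE + yy := (Ev y0 + dt + (par + par)) mod 4) \<and> out ?s = out s"
    using r W y0K p1 mX mP aK pb unfolding yy_def by (simp add: ex_simps and3 add_ac)
  have ms: "mem ?s = (mem s)(BX + yy := Bit_Operations.xor (Xv y0) (v t),
          BE + yy := (Ev y0 + dt + (par + par)) mod 4)" using st by blast
  have yyK: "yy < K" using y0K p1 by (simp add: yy_def)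
  have c3': "common3 ?s" using c3 st ms yyK unfolding common3_def by auto
  have yyv: "yy = j * 2 ^ Suc t + 2 ^ t" by (simp add: yy_def y0_def p_def)
  have tab': "\<forall>y<K. (2 ^ Suc t dvd y \<or> (2 ^ t dvd y \<and> y < Suc j * 2 ^ Suc t)) \<longrightarrow>
          mem ?s (BX + y) = Xv y \<and> mem ?s (BE + y) = Ev y"
  proof (intro allI impI)
    fix y assume y: "y < K" "2 ^ Suc t dvd y \<or> (2 ^ t dvd y \<and> y < Suc j * 2 ^ Suc t)"
    show "mem ?s (BX + y) = Xv y \<and> mem ?s (BE + y) = Ev y"
    proof (cases "y = yy")
      case True
      have "Xv yy = Bit_Operations.xor (Xv y0) (v t)" "Ev yy = (Ev y0 + dt + (par + par)) mod 4"
        using Xv_step[OF tk dv] Ev_step[OF tk dv] unfolding yy_def p_def dt_def par_def by simp_all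
      then show ?thesis using True ms yyK p1 by simp
    next
      case False
      have "2 ^ Suc t dvd y \<or> (2 ^ t dvd y \<and> y < j * 2 ^ Suc t)"
        using y False odd_mult[of t y j] yyv by blast
      then have "mem s (BX + y) = Xv y \<and> mem s (BE + y) = Ev y" using tab y by blast
      then show ?thesis using False ms yyK y by simp
    qed
  qed
  have "regs ?s 19 = Suc j * 2 ^ Suc t" using st by (simp add: y0_def p_def algebra_simps)
  then show "I4 t m (Suc j) ?s" using a st c3' tab' unfolding I4_def p_def dt_def by auto
qed simp


lemma blk3c: "I4 t m m s \<Longrightarrow> t = k - Suc i \<Longrightarrow> i < k \<Longrightarrow> reach prog w \<gamma> s (I3 (Suc i)) 2"
proof (rule reach_run[of _ _ _ _ 2])
  assume a: "I4 t m m s" "t = k - Suc i" "i < k"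
  let ?s = "run prog w \<gamma> 2 s"
  have st: "pc ?s = 36 \<and> base ?s \<and> regs ?s 13 = t \<and> mem ?s = mem s \<and> out ?s = out s"
    using a W unfolding I4_def common3_def by (simp add: ex_simps)
  have e: "k - Suc i = t" using a by simp
  have tab: "\<forall>y<K. 2 ^ t dvd y \<longrightarrow> mem s (BX + y) = Xv y \<and> mem s (BE + y) = Ev y"
    using a unfolding I4_def by auto
  have c3: "common3 s" using a unfolding I4_def by blast
  have c3': "common3 ?s" using c3 st unfolding common3_def by simp
  show "I3 (Suc i) ?s" unfolding I3_def e using c3' st tab a by simp
qed simp

definition OUTy :: "nat \<Rightarrow> nat \<Rightarrow> complex option" where
  "OUTy y = (\<lambda>x. if \<exists>y'<y. x = Xv y' then Some (\<gamma> * qf_phase k d J (THE y'. y' < K \<and> x = Xv y'))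
     else OUT0 x)"

definition I5 :: "nat \<Rightarrow> rstate \<Rightarrow> bool" where
  "I5 y s \<longleftrightarrow> pc s = 70 \<and> base s \<and> y \<le> K \<and> regs s 13 = y
     \<and> (\<forall>y<K. mem s (BX + y) = Xv y \<and> mem s (BE + y) = Ev y) \<and> out s = OUTy y"

lemma blk3x: "I3 k s \<Longrightarrow> reach prog w \<gamma> s (I5 0) 2"
proof (rule reach_run[of _ _ _ _ 2])
  assume a: "I3 k s"
  let ?s = "run prog w \<gamma> 2 s"
  have st: "pc ?s = 70 \<and> base ?s \<and> regs ?s 13 = 0 \<and> mem ?s = mem s \<and> out ?s = out s"
    using a W unfolding I3_def common3_def by (simp add: ex_simps)
  have "OUTy 0 = OUT0" by (simp add: OUTy_def)
  then show "I5 0 ?s" using a st unfolding I3_def I5_def common3_def by simp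
qed simp

lemma Xv_inj: "Xv a = Xv b \<Longrightarrow> a < K \<Longrightarrow> b < K \<Longrightarrow> a = b"
  unfolding Xv_def K_def by (metis xor_cancel span_inj[OF valid])

lemma Xv_less: "Xv y < N"
  unfolding Xv_def N_def using valid
  by (intro xor_less_pow span_less) (auto simp: valid_desc_def)

lemma blk4: "I5 y s \<Longrightarrow> y < K \<Longrightarrow> reach prog w \<gamma> s (I5 (Suc y)) 9"
proof (rule reach_run[of _ _ _ _ 9])
  assume a: "I5 y s" "y < K"
  let ?s = "run prog w \<gamma> 9 s"
  have m: "mem s (BX + y) = Xv y" "mem s (BE + y) = Ev y" using a unfolding I5_def by auto
  have st: "pc ?s = 70 \<and> base ?s \<and> regs ?s 13 = Suc y \<and> mem ?s = mem s
     \<and> out ?s = (out s)(Xv y := Some (\<gamma> * \<i> ^ (Ev y mod 4)))"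
    using a W m unfolding I5_def by (simp add: ex_simps add_ac)
  have ph: "\<i> ^ (Ev y mod 4) = qf_phase k d J y" unfolding Ev_def
    by (simp add: i_pow_mod qf_phase_eq)
  have the: "(THE y'. y' < K \<and> Xv y = Xv y') = y"
    using a(2) Xv_inj by (intro the_equality) auto
  have "OUTy (Suc y) = (OUTy y)(Xv y := Some (\<gamma> * qf_phase k d J y))"
  proof
    fix x show "OUTy (Suc y) x = ((OUTy y)(Xv y := Some (\<gamma> * qf_phase k d J y))) x"
    proof (cases "x = Xv y")
      case True then show ?thesis using the by (auto simp: OUTy_def)
    next
      case False
      then have "(\<exists>y'<Suc y. x = Xv y') \<longleftrightarrow> (\<exists>y'<y. x = Xv y')" using less_Suc_eq by auto
      then show ?thesis using False by (simp add: OUTy_def)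
    qed
  qed
  then show "I5 (Suc y) ?s" using a st ph unfolding I5_def by simp
qed simp

lemma blk4x: "I5 K s \<Longrightarrow> reach prog w \<gamma> s (\<lambda>s'. halted prog s' \<and> output_is n (qf_state k h v d J \<gamma>) (out s')) 2"
proof (rule reach_run[of _ _ _ _ 2])
  assume a: "I5 K s"
  let ?s = "run prog w \<gamma> 2 s"
  have st: "pc ?s = 79 \<and> out ?s = out s"
    using a W unfolding I5_def by (simp add: ex_simps)
  have "out s = OUTy K" using a unfolding I5_def by simp
  moreover have "OUTy K x = (if x < 2 ^ n then Some (qf_state k h v d J \<gamma> x) else None)" for x
    using Xv_less unfolding OUTy_def qf_state_def Xv_def[symmetric] K_def[symmetric] N_def[symmetric]
    by auto
  ultimately show "halted prog ?s \<and> output_is n (qf_state k h v d J \<gamma>) (out ?s)"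
    using st by (simp add: halted_def output_is_def)
qed simp


lemma geo: "(\<Sum>i\<in>{0..<m}. (12::nat) + (21 * 2 ^ i + 2)) \<le> 14 * m + 21 * 2 ^ m"
  by (induction m) auto

abbreviation "Final \<equiv> (\<lambda>s'. halted prog s' \<and> output_is n (qf_state k h v d J \<gamma>) (out s'))"

lemma R1: "reach prog w \<gamma> (init_state n k h v d J) (I2 1) (16 + (5 * N + 3))"
proof -
  have L: "\<And>s'. I1 0 s' \<Longrightarrow> reach prog w \<gamma> s' (I2 1) (5 * N + 3)"
    using loop_reach_const[of I1 N prog w \<gamma> 5 "I2 1" 3] blk1 blk1x by blast
  show ?thesis by (rule reach_trans[OF blk_init L])
qed

lemma R2: "I2 1 s \<Longrightarrow> reach prog w \<gamma> s (I3 0) (11 * (K - 1) + 5)"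
  using loop_reach[of I2 K prog w \<gamma> "\<lambda>_. 11" "I3 0" 5 1 s] blk2 blk2x W by (simp add: mult.commute)

lemma R3body: "I3 i s \<Longrightarrow> i < k \<Longrightarrow> reach prog w \<gamma> s (I3 (Suc i)) (12 + (21 * 2 ^ i + 2))"
  by (rule reach_trans[OF blk3a loop_reach_const[of "I4 (k - Suc i) (2 ^ i)" "2 ^ i" prog w \<gamma> 21 "I3 (Suc i)" 2]])
     (auto intro: blk3b blk3c)

lemma R3: "I3 0 s \<Longrightarrow> reach prog w \<gamma> s (I5 0) ((\<Sum>i\<in>{0..<k}. 12 + (21 * 2 ^ i + 2)) + 2)"
  using loop_reach[of I3 k prog w \<gamma> "\<lambda>i. 12 + (21 * 2 ^ i + 2)" "I5 0" 2 0 s] R3body blk3x by simp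

lemma R4: "I5 0 s \<Longrightarrow> reach prog w \<gamma> s Final (9 * K + 2)"
  using loop_reach_const[of I5 K prog w \<gamma> 9 Final 2 s] blk4 blk4x by simp

lemma main_reach: "reach prog w \<gamma> (init_state n k h v d J) Final (100 * 2 ^ n)"
proof -
  have "reach prog w \<gamma> (init_state n k h v d J) Final
     ((16 + (5 * N + 3)) + ((11 * (K - 1) + 5) + (((\<Sum>i\<in>{0..<k}. 12 + (21 * 2 ^ i + 2)) + 2) + (9 * K + 2))))"
    by (rule reach_trans[OF R1 reach_trans[OF R2 reach_trans[OF R3 R4]]])
  moreover have "k < K" unfolding K_def by (rule less_exp)
  then have "(16 + (5 * N + 3)) + ((11 * (K - 1) + 5) + (((\<Sum>i\<in>{0..<k}. 12 + (21 * 2 ^ i + 2)) + 2) + (9 * K + 2)))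
      \<le> 100 * 2 ^ n" using geo[of k] W unfolding N_def[symmetric] K_def[symmetric] by linarith
  ultimately show ?thesis by (rule reach_mono)
qed

end

theorem corollary1:
  shows "(\<exists>(P :: instr list) (C :: nat). \<forall>n w k h v d J \<gamma>.
            valid_desc n k h v d J \<gamma> \<and> n + 3 \<le> w \<longrightarrow>
            (\<exists>t \<le> C * 2 ^ n.
               halted P (run P w \<gamma> t (init_state n k h v d J)) \<and>
               output_is n (qf_state k h v d J \<gamma>)
                 (out (run P w \<gamma> t (init_state n k h v d J)))))
       \<and> (\<forall>(P :: instr list) n w k h v d J \<gamma> t.
            valid_desc n k h v d J \<gamma> \<and>
            output_is n (qf_state k h v d J \<gamma>) (out (run P w \<gamma> t (init_state n k h v d J)))
            \<longrightarrow> 2 ^ n \<le> t)"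
proof (intro conjI)
  show "\<exists>(P :: instr list) (C :: nat). \<forall>n w k h v d J \<gamma>.
            valid_desc n k h v d J \<gamma> \<and> n + 3 \<le> w \<longrightarrow>
            (\<exists>t \<le> C * 2 ^ n.
               halted P (run P w \<gamma> t (init_state n k h v d J)) \<and>
               output_is n (qf_state k h v d J \<gamma>)
                 (out (run P w \<gamma> t (init_state n k h v d J))))"
  proof (rule exI[of _ prog], rule exI[of _ 100], intro allI impI)
    fix n w k h v d J \<gamma>
    assume a: "valid_desc n k h v d J \<gamma> \<and> n + 3 \<le> w"
    then interpret qfl n w k h v d J \<gamma> by unfold_locales auto
    show "\<exists>t \<le> 100 * 2 ^ n.
               halted prog (run prog w \<gamma> t (init_state n k h v d J)) \<and>
               output_is n (qf_state k h v d J \<gamma>)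
                 (out (run prog w \<gamma> t (init_state n k h v d J)))"
      using main_reach unfolding reach_def by blast
  qed
next
  show "\<forall>(P :: instr list) n w k h v d J \<gamma> t.
            valid_desc n k h v d J \<gamma> \<and>
            output_is n (qf_state k h v d J \<gamma>) (out (run P w \<gamma> t (init_state n k h v d J)))
            \<longrightarrow> 2 ^ n \<le> t"
    using lower_bound by blast
qed

end
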